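(* Assume Condition (T) (see context) and let $\mathbf W=(W_1,\dots,W_d)$ be the solution of $\mathbf W\stackrel{d}{=}\mathbf A\mathbf W+\mathbf B$ independent of $(\mathbf A,\mathbf B)$. Then for every coordinate $i\in\{1,\dots,d\}$ and every $0<\alpha<\widetilde\alpha_i$ we have $\mathbb E W_i^{\alpha}<\infty$, where $\widetilde\alpha_i=\min\{\alpha_j:i\trianglelefteq j\}$.
   Context: Condition (T) on a random $d\times d$ matrix $\mathbf A$ and random vector $\mathbf B\in\mathbb R^d$: (T-1) $\mathbf A\ge 0$, $\mathbf B\ge 0$ entrywise a.s.; (T-2) $\mathbb P(B_i=0)<1$ for all $i$; (T-3) $\mathbb P(A_{ij}=0)=1$ whenever $i>j$; (T-4) there exist $\alpha_1,\dots,\alpha_d>0$, pairwise distinct, with $\mathbb E A_{ii}^{\alpha_i}=1$; (T-5) $\mathbb E A_{ij}^{\alpha_i}<\infty$ for all $i,j$; (T-6) $\mathbb E B_i^{\alpha_i}<\infty$; (T-7) $\mathbb E[A_{ii}^{\alpha_i}\log^+A_{ii}]<\infty$; (T-8) the law of $\log A_{ii}$ given $\{A_{ii}>0\}$ is non-arithmetic. (Under (T) the solution $\mathbf W$ exists and is unique in law.) A nonnegative random variable $X$ is positive if $\mathbb P(X>0)>0$. Write $i\trianglelefteq j$ if there exist $m\ge0$ and indices $i=i(0)\le\dots\le i(m)=j$ with $A_{i(k)i(k+1)}$ positive for each $k<m$. *)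

theory Defs
  imports "HOL-Probability.Probability"
begin

definition positive_rv :: "'a measure \<Rightarrow> ('a \<Rightarrow> real) \<Rightarrow> bool" where
  "positive_rv M X \<longleftrightarrow> measure M {\<omega> \<in> space M. X \<omega> > 0} > 0"

definition tri_step :: "'a measure \<Rightarrow> ('a \<Rightarrow> ((real, 'n::{finite,linorder}) vec, 'n) vec) \<Rightarrow> ('n \<times> 'n) set" where
  "tri_step M A = {(k, l). k \<le> l \<and> positive_rv M (\<lambda>\<omega>. A \<omega> $ k $ l)}"

definition tri_le :: "'a measure \<Rightarrow> ('a \<Rightarrow> ((real, 'n::{finite,linorder}) vec, 'n) vec) \<Rightarrow> 'n \<Rightarrow> 'n \<Rightarrow> bool" where
  "tri_le M A i j \<longleftrightarrow> (i, j) \<in> (tri_step M A)\<^sup>*"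

definition alpha_tilde :: "'a measure \<Rightarrow> ('a \<Rightarrow> ((real, 'n::{finite,linorder}) vec, 'n) vec) \<Rightarrow> ('n \<Rightarrow> real) \<Rightarrow> 'n \<Rightarrow> real" where
  "alpha_tilde M A \<alpha> i = Min (\<alpha> ` {j. tri_le M A i j})"

definition log_nonarithmetic :: "'a measure \<Rightarrow> ('a \<Rightarrow> real) \<Rightarrow> bool" where
  "log_nonarithmetic M X \<longleftrightarrow>
     \<not> (\<exists>h>0. AE \<omega> in M. X \<omega> > 0 \<longrightarrow> ln (X \<omega>) \<in> range (\<lambda>k::int. h * of_int k))"

definition condition_T :: "'a measure \<Rightarrow> ('a \<Rightarrow> ((real, 'n::{finite,linorder}) vec, 'n) vec) \<Rightarrow> ('a \<Rightarrow> (real, 'n) vec) \<Rightarrow> ('n \<Rightarrow> real) \<Rightarrow> bool" where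
  "condition_T M A B \<alpha> \<longleftrightarrow>
     (AE \<omega> in M. (\<forall>i j. A \<omega> $ i $ j \<ge> 0) \<and> (\<forall>i. B \<omega> $ i \<ge> 0)) \<and>
     (\<forall>i. measure M {\<omega> \<in> space M. B \<omega> $ i = 0} < 1) \<and>
     (\<forall>i j. i > j \<longrightarrow> measure M {\<omega> \<in> space M. A \<omega> $ i $ j = 0} = 1) \<and>
     (\<forall>i. \<alpha> i > 0) \<and> inj \<alpha> \<and>
     (\<forall>i. (\<integral>\<^sup>+\<omega>. ennreal (A \<omega> $ i $ i powr \<alpha> i) \<partial>M) = 1) \<and>
     (\<forall>i j. (\<integral>\<^sup>+\<omega>. ennreal (A \<omega> $ i $ j powr \<alpha> i) \<partial>M) < \<infinity>) \<and>
     (\<forall>i. (\<integral>\<^sup>+\<omega>. ennreal (B \<omega> $ i powr \<alpha> i) \<partial>M) < \<infinity>) \<and>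
     (\<forall>i. (\<integral>\<^sup>+\<omega>. ennreal (A \<omega> $ i $ i powr \<alpha> i * max 0 (ln (A \<omega> $ i $ i))) \<partial>M) < \<infinity>) \<and>
     (\<forall>i. log_nonarithmetic M (\<lambda>\<omega>. A \<omega> $ i $ i))"

end

theory Submission
  imports Defs
begin

lemma vn_meas[measurable]: "(\<lambda>x::(real,'n::finite) vec. x $ i) \<in> borel_measurable borel"
  by (intro borel_measurable_continuous_onI continuous_intros)
lemma vn_meas2[measurable]: "(\<lambda>x::((real,'n::finite) vec,'m::finite) vec. x $ i) \<in> borel_measurable borel"
  by (intro borel_measurable_continuous_onI continuous_intros)
lemma mv_cont: "continuous_on UNIV (\<lambda>p::((real, 'n::finite) vec, 'n) vec \<times> (real, 'n) vec. fst p *v snd p)"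
  unfolding matrix_vector_mult_def
  by (intro continuous_on_vec_lambda continuous_intros)
lemma mv_meas[measurable]: "(\<lambda>p::((real, 'n::finite) vec, 'n) vec \<times> (real, 'n) vec. fst p *v snd p) \<in> borel_measurable borel"
  by (rule borel_measurable_continuous_onI[OF mv_cont])

lemma powr_le_1_plus:
  fixes x a b :: real assumes "0 \<le> a" "a \<le> b"
  shows "x powr a \<le> 1 + x powr b"
proof (cases "x = 0")
  case True then show ?thesis by simp
next
  case False
  show ?thesis
  proof (cases "ln x \<le> 0")
    case True
    then have "a * ln x \<le> 0" using assms by (simp add: mult_nonneg_nonpos)
    then have "exp (a * ln x) \<le> 1" by simp
    then show ?thesis using False by (simp add: powr_def add_increasing2)
  next
    case False2: False
    then have "a * ln x \<le> b * ln x" using assms by (intro mult_right_mono) auto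
    then have "exp (a * ln x) \<le> exp (b * ln x)" by simp
    then show ?thesis using False by (simp add: powr_def add_increasing)
  qed
qed

lemma powr_split:
  fixes a K :: real assumes "0 < a" "1 < K"
  obtains K' where "0 < K'" "\<And>x y. 0 \<le> x \<Longrightarrow> 0 \<le> y \<Longrightarrow> (x + y) powr a \<le> K * x powr a + K' * y powr a"
proof -
  define d where "d = K powr (1/a) - 1"
  have "1 < K powr (1/a)" using assms powr_less_mono2[of "1/a" 1 K] by simp
  then have d: "0 < d" by (simp add: d_def)
  have Kd: "(1 + d) powr a = K" using assms by (simp add: d_def powr_powr)
  define K' where "K' = (1/d + 1) powr a"
  have "0 < K'" using d unfolding K'_def by (smt (verit) divide_pos_pos powr_gt_zero)
  moreover have "(x + y) powr a \<le> K * x powr a + K' * y powr a" if xy: "0 \<le> x" "0 \<le> y" for x y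
  proof (cases "y \<le> d * x")
    case True
    have "(x + y) powr a \<le> ((1 + d) * x) powr a"
      using True xy d assms by (intro powr_mono2) (auto simp: algebra_simps)
    also have "\<dots> = K * x powr a" by (simp add: powr_mult Kd)
    also have "\<dots> \<le> K * x powr a + K' * y powr a" using \<open>0 < K'\<close> by simp
    finally show ?thesis .
  next
    case False
    then have "x \<le> y / d" using d by (simp add: field_simps)
    then have "(x + y) powr a \<le> ((1/d + 1) * y) powr a"
      using xy d assms by (intro powr_mono2) (auto simp: algebra_simps)
    also have "\<dots> = K' * y powr a" by (simp add: powr_mult K'_def)
    also have "\<dots> \<le> K * x powr a + K' * y powr a" using assms by simp
    finally show ?thesis .
  qed
  ultimately show ?thesis using that by blast
qed

lemma powr_add2:
  fixes a x y :: real assumes "0 < a" "0 \<le> x" "0 \<le> y"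
  shows "(x + y) powr a \<le> 2 powr a * (x powr a + y powr a)"
proof -
  have "(x + y) powr a \<le> (2 * max x y) powr a" using assms by (intro powr_mono2) auto
  also have "\<dots> = 2 powr a * (max x y) powr a" by (simp add: powr_mult)
  also have "(max x y) powr a \<le> x powr a + y powr a" by (cases "x \<le> y") (auto simp: max_def)
  then have "2 powr a * (max x y) powr a \<le> 2 powr a * (x powr a + y powr a)" by simp
  finally show ?thesis .
qed

lemma tangent_strict:
  fixes y p :: real assumes "0 \<le> y" "0 < p" "p < 1"
  shows "y powr p + p * (1 - p) * (sqrt y - 1)^2 \<le> 1 + p * (y - 1)"
proof -
  define s where "s = sqrt y"
  have s: "0 \<le> s" "y = s^2" using assms by (auto simp: s_def)
  have "s powr p \<le> 1 + p * (s - 1)"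
  proof (cases "s = 0")
    case True then show ?thesis using assms by simp
  next
    case False
    then have "s powr p * 1 powr (1 - p) \<le> p * s + (1 - p) * 1"
      using s assms by (intro Youngs_inequality_0) auto
    then show ?thesis by (simp add: algebra_simps)
  qed
  moreover have "0 \<le> s powr p" by simp
  ultimately have "(s powr p)^2 \<le> (1 + p * (s - 1))^2" by (intro power_mono) auto
  moreover have "y powr p = (s powr p)^2" using s by (simp add: powr_powr power2_eq_square powr_mult)
  ultimately have "y powr p \<le> (1 + p * (s - 1))^2" by simp
  then show ?thesis unfolding s_def[symmetric] using s
    by (simp add: power2_eq_square algebra_simps)
qed


locale perp = prob_space M for M :: "'a measure" +
  fixes A :: "'a \<Rightarrow> ((real, 'n::{finite,linorder}) vec, 'n) vec"
    and B W :: "'a \<Rightarrow> (real, 'n) vec"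
    and \<alpha> :: "'n \<Rightarrow> real"
  assumes Am[measurable]: "A \<in> borel_measurable M" and Bm[measurable]: "B \<in> borel_measurable M"
    and Wm[measurable]: "W \<in> borel_measurable M"
    and T: "condition_T M A B \<alpha>"
    and ind: "indep_set
       (sigma_sets (space M) {(\<lambda>\<omega>. (A \<omega>, B \<omega>)) -` S \<inter> space M | S. S \<in> sets borel})
       (sigma_sets (space M) {W -` S \<inter> space M | S. S \<in> sets borel})"
    and fixp: "distr M borel W = distr M borel (\<lambda>\<omega>. A \<omega> *v W \<omega> + B \<omega>)"
begin

lemma AWB_meas[measurable]: "(\<lambda>\<omega>. A \<omega> *v W \<omega> + B \<omega>) \<in> borel_measurable M"
proof -
  have "(\<lambda>\<omega>. fst (A \<omega>, W \<omega>) *v snd (A \<omega>, W \<omega>)) \<in> borel_measurable M"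
    by (rule measurable_compose[OF _ mv_meas]) measurable
  then show ?thesis by simp
qed

definition "\<nu> = distr M borel (\<lambda>\<omega>. (A \<omega>, B \<omega>))"
definition "\<mu> = distr M borel W"

lemma pf_meas1[measurable]: "(\<lambda>p. fst (fst p) $ i $ j) \<in> borel_measurable ((borel :: (((real, 'n) vec, 'n) vec \<times> (real, 'n) vec) measure) \<Otimes>\<^sub>M (borel :: (real, 'n) vec measure))"
  unfolding borel_prod by (intro borel_measurable_continuous_onI continuous_intros)
lemma pf_meas2[measurable]: "(\<lambda>p. snd p $ i) \<in> borel_measurable ((borel :: (((real, 'n) vec, 'n) vec \<times> (real, 'n) vec) measure) \<Otimes>\<^sub>M (borel :: (real, 'n) vec measure))"
  unfolding borel_prod by (intro borel_measurable_continuous_onI continuous_intros)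

lemma fst_meas[measurable]: "(\<lambda>x::(((real,'n) vec,'n) vec \<times> (real,'n) vec). fst x $ i $ j) \<in> borel_measurable borel"
  by (intro borel_measurable_continuous_onI continuous_intros)

lemma pf_comp:
  fixes G :: "real \<times> real \<Rightarrow> ennreal"
  assumes G: "G \<in> borel_measurable (borel \<Otimes>\<^sub>M borel)"
  shows "(\<lambda>p. G (fst (fst p) $ i $ j, snd p $ k)) \<in> borel_measurable ((borel :: (((real, 'n) vec, 'n) vec \<times> (real, 'n) vec) measure) \<Otimes>\<^sub>M (borel :: (real, 'n) vec measure))"
proof -
  have phi: "(\<lambda>p. (fst (fst p) $ i $ j, snd p $ k)) \<in> ((borel :: (((real, 'n) vec, 'n) vec \<times> (real, 'n) vec) measure) \<Otimes>\<^sub>M (borel :: (real, 'n) vec measure)) \<rightarrow>\<^sub>M (borel \<Otimes>\<^sub>M borel)"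
    unfolding borel_prod by (intro borel_measurable_continuous_onI continuous_intros)
  show ?thesis using measurable_comp[OF phi G] by (simp add: comp_def)
qed

lemma prod_formula:
  fixes F :: "((((real, 'n) vec, 'n) vec \<times> (real, 'n) vec) \<times> (real, 'n) vec) \<Rightarrow> ennreal"
  assumes F[measurable]: "F \<in> borel_measurable (borel \<Otimes>\<^sub>M borel)"
  shows "(\<integral>\<^sup>+\<omega>. F ((A \<omega>, B \<omega>), W \<omega>) \<partial>M) = (\<integral>\<^sup>+w. (\<integral>\<^sup>+x. F (x, w) \<partial>\<nu>) \<partial>\<mu>)"
proof -
  interpret \<nu>: prob_space \<nu> unfolding \<nu>_def by (rule prob_space_distr) measurable
  interpret \<mu>: prob_space \<mu> unfolding \<mu>_def by (rule prob_space_distr) measurable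
  have eq: "\<nu> \<Otimes>\<^sub>M \<mu> = distr M (borel \<Otimes>\<^sub>M borel) (\<lambda>\<omega>. ((A \<omega>, B \<omega>), W \<omega>))"
  proof (rule pair_measure_eqI)
    show "sigma_finite_measure \<nu>" by (rule \<nu>.sigma_finite_measure_axioms)
    show "sigma_finite_measure \<mu>" by (rule \<mu>.sigma_finite_measure_axioms)
    fix X Y assume X: "X \<in> sets \<nu>" and Y: "Y \<in> sets \<mu>"
    have XY: "random_variable (borel \<Otimes>\<^sub>M borel) (\<lambda>\<omega>. ((A \<omega>, B \<omega>), W \<omega>))" by measurable
    have X': "X \<in> sets borel" and Y': "Y \<in> sets borel" using X Y by (auto simp: \<nu>_def \<mu>_def)
    have "emeasure (distr M (borel \<Otimes>\<^sub>M borel) (\<lambda>\<omega>. ((A \<omega>, B \<omega>), W \<omega>))) (X \<times> Y)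
        = emeasure M ((\<lambda>\<omega>. ((A \<omega>, B \<omega>), W \<omega>)) -` (X \<times> Y) \<inter> space M)"
      using X' Y' by (intro emeasure_distr[OF XY]) auto
    also have "(\<lambda>\<omega>. ((A \<omega>, B \<omega>), W \<omega>)) -` (X \<times> Y) \<inter> space M
        = ((\<lambda>\<omega>. (A \<omega>, B \<omega>)) -` X \<inter> space M) \<inter> (W -` Y \<inter> space M)" by auto
    also have "emeasure M \<dots> = emeasure M ((\<lambda>\<omega>. (A \<omega>, B \<omega>)) -` X \<inter> space M) * emeasure M (W -` Y \<inter> space M)"
    proof -
      have "prob (((\<lambda>\<omega>. (A \<omega>, B \<omega>)) -` X \<inter> space M) \<inter> (W -` Y \<inter> space M))
          = prob ((\<lambda>\<omega>. (A \<omega>, B \<omega>)) -` X \<inter> space M) * prob (W -` Y \<inter> space M)"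
        using X' Y' by (intro indep_setD[OF ind] sigma_sets.Basic) auto
      then show ?thesis by (simp add: emeasure_eq_measure measure_nonneg ennreal_mult)
    qed
    also have "\<dots> = emeasure \<nu> X * emeasure \<mu> Y"
      using X' Y' by (simp add: \<nu>_def \<mu>_def emeasure_distr)
    finally show "emeasure \<nu> X * emeasure \<mu> Y = emeasure (distr M (borel \<Otimes>\<^sub>M borel) (\<lambda>\<omega>. ((A \<omega>, B \<omega>), W \<omega>))) (X \<times> Y)" by simp
  qed (simp add: \<nu>_def \<mu>_def)
  interpret pair_sigma_finite \<nu> \<mu> by unfold_locales
  have "(\<integral>\<^sup>+\<omega>. F ((A \<omega>, B \<omega>), W \<omega>) \<partial>M) = integral\<^sup>N (distr M (borel \<Otimes>\<^sub>M borel) (\<lambda>\<omega>. ((A \<omega>, B \<omega>), W \<omega>))) F"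
    by (subst nn_integral_distr) auto
  also have "\<dots> = integral\<^sup>N (\<nu> \<Otimes>\<^sub>M \<mu>) F" by (simp add: eq)
  also have "\<dots> = (\<integral>\<^sup>+w. (\<integral>\<^sup>+x. F (x, w) \<partial>\<nu>) \<partial>\<mu>)"
    by (rule nn_integral_snd[symmetric]) (simp add: \<nu>_def \<mu>_def)
  finally show ?thesis .
qed

lemma nu_int: "f \<in> borel_measurable borel \<Longrightarrow> (\<integral>\<^sup>+x. f x \<partial>\<nu>) = (\<integral>\<^sup>+\<omega>. f (A \<omega>, B \<omega>) \<partial>M)"
  unfolding \<nu>_def by (subst nn_integral_distr) auto

lemma mu_int: "f \<in> borel_measurable borel \<Longrightarrow> (\<integral>\<^sup>+x. f x \<partial>\<mu>) = (\<integral>\<^sup>+\<omega>. f (W \<omega>) \<partial>M)"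
  unfolding \<mu>_def by (subst nn_integral_distr) auto

lemma fixp_int:
  assumes [measurable]: "f \<in> borel_measurable borel"
  shows "(\<integral>\<^sup>+\<omega>. f (W \<omega>) \<partial>M) = (\<integral>\<^sup>+\<omega>. f (A \<omega> *v W \<omega> + B \<omega>) \<partial>M)"
proof -
  have "(\<integral>\<^sup>+\<omega>. f (W \<omega>) \<partial>M) = integral\<^sup>N (distr M borel W) f" by (subst nn_integral_distr) auto
  also have "\<dots> = integral\<^sup>N (distr M borel (\<lambda>\<omega>. A \<omega> *v W \<omega> + B \<omega>)) f" by (simp add: fixp)
  also have "\<dots> = (\<integral>\<^sup>+\<omega>. f (A \<omega> *v W \<omega> + B \<omega>) \<partial>M)" by (subst nn_integral_distr) auto
  finally show ?thesis .
qed

lemma T_nonneg: "AE \<omega> in M. (\<forall>i j. A \<omega> $ i $ j \<ge> 0) \<and> (\<forall>i. B \<omega> $ i \<ge> 0)"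
  using T unfolding condition_T_def by blast

lemma T_alpha_pos: "\<alpha> i > 0" using T unfolding condition_T_def by blast

lemma low_zero: assumes "j < i" shows "AE \<omega> in M. A \<omega> $ i $ j = 0"
proof -
  have "prob {\<omega> \<in> space M. A \<omega> $ i $ j = 0} = 1" using T assms unfolding condition_T_def by blast
  moreover have "{\<omega> \<in> space M. A \<omega> $ i $ j = 0} \<in> sets M" by measurable
  ultimately show ?thesis using prob_Collect_eq_1 by force
qed

lemma nonpos_zero: assumes "\<not> positive_rv M (\<lambda>\<omega>. A \<omega> $ i $ j)" shows "AE \<omega> in M. A \<omega> $ i $ j = 0"
proof -
  have "prob {\<omega> \<in> space M. A \<omega> $ i $ j > 0} = 0" using assms measure_nonneg[of M]
    unfolding positive_rv_def by (meson linorder_not_less order_antisym)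
  moreover have "{\<omega> \<in> space M. A \<omega> $ i $ j > 0} \<in> sets M" by measurable
  ultimately have "AE \<omega> in M. \<not> A \<omega> $ i $ j > 0" using prob_Collect_eq_0[of "\<lambda>\<omega>. A \<omega> $ i $ j > 0"] by simp
  then show ?thesis using T_nonneg by eventually_elim (metis order_antisym_conv not_less)
qed

lemma tri_fin: "finite {j. tri_le M A i j}" by simp
lemma tri_refl: "tri_le M A i i" unfolding tri_le_def by simp

lemma at_le_alpha: "alpha_tilde M A \<alpha> i \<le> \<alpha> i"
  unfolding alpha_tilde_def using tri_refl by (intro Min_le) auto

lemma at_mono: assumes "i \<le> j" "positive_rv M (\<lambda>\<omega>. A \<omega> $ i $ j)"
  shows "alpha_tilde M A \<alpha> i \<le> alpha_tilde M A \<alpha> j"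
proof -
  have "{k. tri_le M A j k} \<subseteq> {k. tri_le M A i k}"
    using assms unfolding tri_le_def tri_step_def by (auto intro: converse_rtrancl_into_rtrancl)
  then have "\<alpha> ` {k. tri_le M A j k} \<subseteq> \<alpha> ` {k. tri_le M A i k}" by auto
  then show ?thesis unfolding alpha_tilde_def using tri_refl[of j]
    by (intro Min_antimono) auto
qed

lemma A_mom: assumes "0 \<le> a" "a \<le> \<alpha> i"
  shows "(\<integral>\<^sup>+\<omega>. ennreal (A \<omega> $ i $ j powr a) \<partial>M) < \<infinity>"
proof -
  have "(\<integral>\<^sup>+\<omega>. ennreal (A \<omega> $ i $ j powr a) \<partial>M) \<le> (\<integral>\<^sup>+\<omega>. 1 + ennreal (A \<omega> $ i $ j powr \<alpha> i) \<partial>M)"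
  proof (intro nn_integral_mono)
    fix \<omega>
    have "ennreal (A \<omega> $ i $ j powr a) \<le> ennreal (1 + A \<omega> $ i $ j powr \<alpha> i)"
      using assms by (intro ennreal_leI powr_le_1_plus)
    then show "ennreal (A \<omega> $ i $ j powr a) \<le> 1 + ennreal (A \<omega> $ i $ j powr \<alpha> i)" by (simp add: ennreal_plus)
  qed
  also have "\<dots> = 1 + (\<integral>\<^sup>+\<omega>. ennreal (A \<omega> $ i $ j powr \<alpha> i) \<partial>M)"
    by (subst nn_integral_add) (auto simp: emeasure_space_1)
  also have "\<dots> < \<infinity>" using T unfolding condition_T_def by auto
  finally show ?thesis .
qed

lemma B_mom: assumes "0 \<le> a" "a \<le> \<alpha> i"
  shows "(\<integral>\<^sup>+\<omega>. ennreal (B \<omega> $ i powr a) \<partial>M) < \<infinity>"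
proof -
  have "(\<integral>\<^sup>+\<omega>. ennreal (B \<omega> $ i powr a) \<partial>M) \<le> (\<integral>\<^sup>+\<omega>. 1 + ennreal (B \<omega> $ i powr \<alpha> i) \<partial>M)"
  proof (intro nn_integral_mono)
    fix \<omega>
    have "ennreal (B \<omega> $ i powr a) \<le> ennreal (1 + B \<omega> $ i powr \<alpha> i)"
      using assms by (intro ennreal_leI powr_le_1_plus)
    then show "ennreal (B \<omega> $ i powr a) \<le> 1 + ennreal (B \<omega> $ i powr \<alpha> i)" by (simp add: ennreal_plus)
  qed
  also have "\<dots> = 1 + (\<integral>\<^sup>+\<omega>. ennreal (B \<omega> $ i powr \<alpha> i) \<partial>M)"
    by (subst nn_integral_add) (auto simp: emeasure_space_1)
  also have "\<dots> < \<infinity>" using T unfolding condition_T_def by auto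
  finally show ?thesis .
qed

lemma c_lt1:
  assumes a: "0 < a" "a < \<alpha> i"
  obtains c where "0 \<le> c" "c < 1" "(\<integral>\<^sup>+\<omega>. ennreal (A \<omega> $ i $ i powr a) \<partial>M) = ennreal c"
proof -
  define Y where "Y \<omega> = A \<omega> $ i $ i powr \<alpha> i" for \<omega>
  define p where "p = a / \<alpha> i"
  have al: "\<alpha> i > 0" by (rule T_alpha_pos)
  have p: "0 < p" "p < 1" using a al by (auto simp: p_def field_simps)
  have Ym[measurable]: "Y \<in> borel_measurable M" unfolding Y_def by measurable
  have Y0: "0 \<le> Y \<omega>" for \<omega> by (simp add: Y_def)
  have nnY: "(\<integral>\<^sup>+\<omega>. ennreal (Y \<omega>) \<partial>M) = 1" using T unfolding condition_T_def Y_def by blast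
  have intY: "integrable M Y" by (rule integrableI_nonneg) (auto simp: Y0 nnY)
  have "(\<integral>\<^sup>+\<omega>. ennreal (Y \<omega>) \<partial>M) = ennreal (integral\<^sup>L M Y)"
    by (rule nn_integral_eq_integral) (auto simp: intY Y0)
  then have iY: "integral\<^sup>L M Y = 1" using nnY Bochner_Integration.integral_nonneg[of M Y] Y0 by simp
  define Z where "Z \<omega> = A \<omega> $ i $ i powr a" for \<omega>
  have ZY: "Z \<omega> = Y \<omega> powr p" for \<omega> using al by (simp add: Z_def Y_def powr_powr p_def)
  have Zm[measurable]: "Z \<in> borel_measurable M" unfolding Z_def by measurable
  have tang: "Z \<omega> + p * (1 - p) * (sqrt (Y \<omega>) - 1)^2 \<le> 1 + p * (Y \<omega> - 1)" for \<omega>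
    unfolding ZY using tangent_strict[OF Y0 p] .
  have sq0: "0 \<le> p * (1 - p) * (sqrt (Y \<omega>) - 1)^2" for \<omega> using p by simp
  have intZ: "integrable M Z"
  proof (rule Bochner_Integration.integrable_bound[of M "\<lambda>\<omega>. 1 + p * (Y \<omega> - 1)"])
    show "integrable M (\<lambda>\<omega>. 1 + p * (Y \<omega> - 1))" using intY by auto
    show "AE \<omega> in M. norm (Z \<omega>) \<le> norm (1 + p * (Y \<omega> - 1))"
    proof (intro AE_I2)
      fix \<omega>
      have "0 \<le> Z \<omega>" by (simp add: Z_def)
      then show "norm (Z \<omega>) \<le> norm (1 + p * (Y \<omega> - 1))" using tang[of \<omega>] sq0[of \<omega>] by simp
    qed
  qed simp
  define c where "c = integral\<^sup>L M Z"
  have Z0: "0 \<le> Z \<omega>" for \<omega> by (simp add: Z_def)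
  have c0: "0 \<le> c" unfolding c_def by (rule Bochner_Integration.integral_nonneg) (simp add: ZY)
  have cnn: "(\<integral>\<^sup>+\<omega>. ennreal (A \<omega> $ i $ i powr a) \<partial>M) = ennreal c"
  proof -
    have "(\<integral>\<^sup>+\<omega>. ennreal (Z \<omega>) \<partial>M) = ennreal c"
      unfolding c_def by (rule nn_integral_eq_integral) (auto simp: intZ Z0)
    then show ?thesis by (simp add: Z_def)
  qed
  define g where "g \<omega> = 1 + p * (Y \<omega> - 1) - Z \<omega>" for \<omega>
  have intg: "integrable M g" unfolding g_def using intY intZ by auto
  have g0: "0 \<le> g \<omega>" for \<omega> using tang[of \<omega>] sq0[of \<omega>] by (simp add: g_def)
  have ig: "integral\<^sup>L M g = 1 - c"
  proof -
    have eq: "g = (\<lambda>\<omega>. ((1 - p) + p * Y \<omega>) - Z \<omega>)" by (auto simp: g_def algebra_simps)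
    have i1: "integrable M (\<lambda>\<omega>. (1 - p) + p * Y \<omega>)" using intY by auto
    have "integral\<^sup>L M g = integral\<^sup>L M (\<lambda>\<omega>. (1 - p) + p * Y \<omega>) - integral\<^sup>L M Z"
      unfolding eq by (rule Bochner_Integration.integral_diff[OF i1 intZ])
    also have "integral\<^sup>L M (\<lambda>\<omega>. (1 - p) + p * Y \<omega>) = (1 - p) + p * integral\<^sup>L M Y"
      using intY by (subst Bochner_Integration.integral_add) (auto simp: prob_space)
    finally show ?thesis using iY by (simp add: c_def)
  qed
  have "c < 1"
  proof (rule ccontr)
    assume "\<not> c < 1"
    then have "integral\<^sup>L M g = 0" using ig Bochner_Integration.integral_nonneg[of M g] g0 by simp
    then have "AE \<omega> in M. g \<omega> = 0" using integral_nonneg_eq_0_iff_AE[OF intg] g0 by simp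
    then have "AE \<omega> in M. Y \<omega> = 1"
    proof eventually_elim
      case (elim \<omega>)
      have "p * (1 - p) * (sqrt (Y \<omega>) - 1)^2 \<le> 0" using tang[of \<omega>] elim by (simp add: g_def)
      moreover have pp: "0 < p * (1 - p)" using p by simp
      ultimately have "(sqrt (Y \<omega>) - 1)^2 \<le> 0"
        using mult_le_cancel_left_pos[OF pp, of "(sqrt (Y \<omega>) - 1)^2" 0] by simp
      then have "(sqrt (Y \<omega>) - 1)^2 = 0" by (intro order_antisym) auto
      then have "sqrt (Y \<omega>) = 1" by simp
      then show ?case by simp
    qed
    then have "AE \<omega> in M. A \<omega> $ i $ i > 0 \<longrightarrow> ln (A \<omega> $ i $ i) \<in> range (\<lambda>k::int. 1 * of_int k)"
    proof eventually_elim
      case (elim \<omega>)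
      then have "A \<omega> $ i $ i \<noteq> 0" "exp (\<alpha> i * ln (A \<omega> $ i $ i)) = 1"
        by (auto simp: Y_def powr_def split: if_splits)
      then have "ln (A \<omega> $ i $ i) = 0" using al by simp
      then show ?case by (auto intro: range_eqI[of _ _ 0])
    qed
    note ae = this
    have "\<exists>h>0. AE \<omega> in M. A \<omega> $ i $ i > 0 \<longrightarrow> ln (A \<omega> $ i $ i) \<in> range (\<lambda>k::int. h * of_int k)"
    proof (intro exI[of _ "1::real"] conjI)
      show "AE \<omega> in M. A \<omega> $ i $ i > 0 \<longrightarrow> ln (A \<omega> $ i $ i) \<in> range (\<lambda>k::int. 1 * of_int k)" by (rule ae)
    qed simp
    then have "\<not> log_nonarithmetic M (\<lambda>\<omega>. A \<omega> $ i $ i)"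
      unfolding log_nonarithmetic_def by blast
    then show False using T unfolding condition_T_def by blast
  qed
  then show ?thesis using that c0 cnn by blast
qed

definition Rf :: "'n \<Rightarrow> 'a \<Rightarrow> real" where
  "Rf i \<omega> = (\<Sum>j\<in>UNIV - {i}. A \<omega> $ i $ j * \<bar>W \<omega> $ j\<bar>) + B \<omega> $ i"

lemma Rf_meas[measurable]: "Rf i \<in> borel_measurable M"
  unfolding Rf_def by measurable

definition hh :: "'n \<Rightarrow> real \<Rightarrow> real \<Rightarrow> real \<Rightarrow> ennreal" where
  "hh i a T u = (\<integral>\<^sup>+\<omega>. ennreal (min T (u * \<bar>W \<omega> $ i\<bar> powr a)) \<partial>M)"

lemma coord_bound:
  assumes "\<forall>i j. A \<omega> $ i $ j \<ge> 0" "\<forall>i. B \<omega> $ i \<ge> 0"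
  shows "\<bar>(A \<omega> *v W \<omega> + B \<omega>) $ i\<bar> \<le> A \<omega> $ i $ i * \<bar>W \<omega> $ i\<bar> + Rf i \<omega>"
proof -
  have "(A \<omega> *v W \<omega> + B \<omega>) $ i = (\<Sum>j\<in>UNIV. A \<omega> $ i $ j * W \<omega> $ j) + B \<omega> $ i"
    by (simp add: matrix_vector_mult_def)
  also have "\<bar>\<dots>\<bar> \<le> (\<Sum>j\<in>UNIV. \<bar>A \<omega> $ i $ j * W \<omega> $ j\<bar>) + \<bar>B \<omega> $ i\<bar>"
    by (rule order_trans[OF abs_triangle_ineq]) (simp add: sum_abs)
  also have "\<dots> = (\<Sum>j\<in>UNIV. A \<omega> $ i $ j * \<bar>W \<omega> $ j\<bar>) + B \<omega> $ i"
    using assms by (simp add: abs_mult)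
  also have "(\<Sum>j\<in>UNIV. A \<omega> $ i $ j * \<bar>W \<omega> $ j\<bar>) = A \<omega> $ i $ i * \<bar>W \<omega> $ i\<bar> + (\<Sum>j\<in>UNIV - {i}. A \<omega> $ i $ j * \<bar>W \<omega> $ j\<bar>)"
    by (subst sum.remove[of UNIV i]) auto
  finally show ?thesis by (simp add: Rf_def add.assoc)
qed

lemma Rf_nonneg:
  assumes "\<forall>i j. A \<omega> $ i $ j \<ge> 0" "\<forall>i. B \<omega> $ i \<ge> 0"
  shows "0 \<le> Rf i \<omega>"
  unfolding Rf_def using assms by (intro add_nonneg_nonneg sum_nonneg) auto

lemma ennreal_add_le: "ennreal (x + y) \<le> ennreal x + ennreal y"
proof (cases "0 \<le> x \<and> 0 \<le> y")
  case True then show ?thesis by (simp add: ennreal_plus)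
next
  case False
  then show ?thesis
  proof (cases "x < 0")
    case True
    then have "ennreal (x + y) \<le> ennreal y" by (intro ennreal_leI) simp
    then show ?thesis using True by (simp add: ennreal_neg)
  next
    case False2: False
    then have "y < 0" using False by auto
    then have "ennreal (x + y) \<le> ennreal x" by (intro ennreal_leI) simp
    then show ?thesis using \<open>y < 0\<close> by (simp add: ennreal_neg)
  qed
qed

lemma min_split:
  fixes T u X P Q :: real
  assumes "0 \<le> u" "0 \<le> Q" "X \<le> P + Q"
  shows "min T (u * X) \<le> min T (u * P) + u * Q"
proof -
  have "u * X \<le> u * P + u * Q" using assms by (simp add: mult_left_mono distrib_left[symmetric])
  moreover have "0 \<le> u * Q" using assms by simp
  ultimately show ?thesis by linarith
qed

lemma step_ineq:
  assumes a: "0 < a" and K: "0 \<le> K" "0 \<le> K'"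
    and split: "\<And>x y. 0 \<le> x \<Longrightarrow> 0 \<le> y \<Longrightarrow> (x + y) powr a \<le> K * x powr a + K' * y powr a"
    and c: "(\<integral>\<^sup>+\<omega>. ennreal (A \<omega> $ i $ i powr a) \<partial>M) = ennreal c" "0 \<le> c"
    and u: "0 \<le> u"
  shows "hh i a T u \<le> hh i a T (u * K * c) + ennreal (u * K') * (\<integral>\<^sup>+\<omega>. ennreal (Rf i \<omega> powr a) \<partial>M)"
proof -
  interpret \<nu>: prob_space \<nu> unfolding \<nu>_def by (rule prob_space_distr) measurable
  have "hh i a T u = (\<integral>\<^sup>+\<omega>. ennreal (min T (u * \<bar>(A \<omega> *v W \<omega> + B \<omega>) $ i\<bar> powr a)) \<partial>M)"
    unfolding hh_def by (rule fixp_int[where f="\<lambda>v. ennreal (min T (u * \<bar>v $ i\<bar> powr a))"]) measurable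
  also have "\<dots> \<le> (\<integral>\<^sup>+\<omega>. ennreal (min T (u * K * A \<omega> $ i $ i powr a * \<bar>W \<omega> $ i\<bar> powr a)) + ennreal (u * K') * ennreal (Rf i \<omega> powr a) \<partial>M)"
  proof (rule nn_integral_mono_AE)
    show "AE \<omega> in M. ennreal (min T (u * \<bar>(A \<omega> *v W \<omega> + B \<omega>) $ i\<bar> powr a))
       \<le> ennreal (min T (u * K * A \<omega> $ i $ i powr a * \<bar>W \<omega> $ i\<bar> powr a)) + ennreal (u * K') * ennreal (Rf i \<omega> powr a)"
      using T_nonneg
    proof eventually_elim
      case (elim \<omega>)
      have A0: "0 \<le> A \<omega> $ i $ i" using elim by auto
      have R0: "0 \<le> Rf i \<omega>" using elim by (intro Rf_nonneg) auto
      have "\<bar>(A \<omega> *v W \<omega> + B \<omega>) $ i\<bar> powr a \<le> (A \<omega> $ i $ i * \<bar>W \<omega> $ i\<bar> + Rf i \<omega>) powr a"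
        using elim a by (intro powr_mono2 coord_bound) auto
      also have "\<dots> \<le> K * (A \<omega> $ i $ i * \<bar>W \<omega> $ i\<bar>) powr a + K' * Rf i \<omega> powr a"
        using A0 R0 by (intro split) auto
      finally have "\<bar>(A \<omega> *v W \<omega> + B \<omega>) $ i\<bar> powr a \<le> K * (A \<omega> $ i $ i powr a * \<bar>W \<omega> $ i\<bar> powr a) + K' * Rf i \<omega> powr a"
        by (simp add: powr_mult)
      then have "min T (u * \<bar>(A \<omega> *v W \<omega> + B \<omega>) $ i\<bar> powr a) \<le> min T (u * (K * (A \<omega> $ i $ i powr a * \<bar>W \<omega> $ i\<bar> powr a))) + u * (K' * Rf i \<omega> powr a)"
        using u K by (intro min_split) auto
      then have "ennreal (min T (u * \<bar>(A \<omega> *v W \<omega> + B \<omega>) $ i\<bar> powr a)) \<le> ennreal (min T (u * K * A \<omega> $ i $ i powr a * \<bar>W \<omega> $ i\<bar> powr a) + (u * K') * Rf i \<omega> powr a)"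
        by (intro ennreal_leI) (simp add: mult.assoc)
      also have "\<dots> \<le> ennreal (min T (u * K * A \<omega> $ i $ i powr a * \<bar>W \<omega> $ i\<bar> powr a)) + ennreal ((u * K') * Rf i \<omega> powr a)"
        by (rule ennreal_add_le)  
      finally show ?case using u K by (simp add: ennreal_mult)
    qed
  qed
  also have "\<dots> = (\<integral>\<^sup>+\<omega>. ennreal (min T (u * K * A \<omega> $ i $ i powr a * \<bar>W \<omega> $ i\<bar> powr a)) \<partial>M) + ennreal (u * K') * (\<integral>\<^sup>+\<omega>. ennreal (Rf i \<omega> powr a) \<partial>M)"
    by (subst nn_integral_add) (auto simp: nn_integral_cmult)
  also have "(\<integral>\<^sup>+\<omega>. ennreal (min T (u * K * A \<omega> $ i $ i powr a * \<bar>W \<omega> $ i\<bar> powr a)) \<partial>M) \<le> hh i a T (u * K * c)"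
  proof -
    have "(\<integral>\<^sup>+\<omega>. ennreal (min T (u * K * A \<omega> $ i $ i powr a * \<bar>W \<omega> $ i\<bar> powr a)) \<partial>M)
       = (\<integral>\<^sup>+w. (\<integral>\<^sup>+x. ennreal (min T (u * K * fst x $ i $ i powr a * \<bar>w $ i\<bar> powr a)) \<partial>\<nu>) \<partial>\<mu>)"
    proof -
      have G: "(\<lambda>q::real\<times>real. ennreal (min T (u * K * fst q powr a * \<bar>snd q\<bar> powr a))) \<in> borel_measurable (borel \<Otimes>\<^sub>M borel)"
        by measurable
      have m: "(\<lambda>p::(((real, 'n) vec, 'n) vec \<times> (real, 'n) vec) \<times> (real, 'n) vec. ennreal (min T (u * K * fst (fst p) $ i $ i powr a * \<bar>snd p $ i\<bar> powr a))) \<in> borel_measurable (borel \<Otimes>\<^sub>M borel)"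
        using pf_comp[OF G, of i i i] by simp
      show ?thesis using prod_formula[OF m] by simp
    qed
    also have "\<dots> \<le> (\<integral>\<^sup>+w. ennreal (min T (u * K * c * \<bar>w $ i\<bar> powr a)) \<partial>\<mu>)"
    proof (rule nn_integral_mono)
      fix w :: "(real, 'n) vec"
      define s where "s = u * K * \<bar>w $ i\<bar> powr a"
      have s0: "0 \<le> s" using u K by (simp add: s_def)
      have e: "\<And>x. u * K * fst x $ i $ i powr a * \<bar>w $ i\<bar> powr a = s * fst x $ i $ i powr a" by (simp add: s_def)
      have "(\<integral>\<^sup>+x. ennreal (min T (s * fst x $ i $ i powr a)) \<partial>\<nu>) \<le> (\<integral>\<^sup>+x. ennreal T \<partial>\<nu>)"
        by (intro nn_integral_mono ennreal_leI) simp
      also have "\<dots> = ennreal T" by (simp add: \<nu>.emeasure_space_1)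
      finally have 1: "(\<integral>\<^sup>+x. ennreal (min T (s * fst x $ i $ i powr a)) \<partial>\<nu>) \<le> ennreal T" .
      have "(\<integral>\<^sup>+x. ennreal (min T (s * fst x $ i $ i powr a)) \<partial>\<nu>) \<le> (\<integral>\<^sup>+x. ennreal s * ennreal (fst x $ i $ i powr a) \<partial>\<nu>)"
        using s0 by (intro nn_integral_mono) (simp add: ennreal_mult[symmetric] ennreal_leI)
      also have "\<dots> = ennreal s * (\<integral>\<^sup>+x. ennreal (fst x $ i $ i powr a) \<partial>\<nu>)"
        by (rule nn_integral_cmult) (simp add: \<nu>_def, measurable)
      also have "(\<integral>\<^sup>+x. ennreal (fst x $ i $ i powr a) \<partial>\<nu>) = ennreal c"
        using nu_int[of "\<lambda>x. ennreal (fst x $ i $ i powr a)"] c by simp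
      finally have 2: "(\<integral>\<^sup>+x. ennreal (min T (s * fst x $ i $ i powr a)) \<partial>\<nu>) \<le> ennreal (s * c)"
        using s0 c by (simp add: ennreal_mult)
      have "(\<integral>\<^sup>+x. ennreal (min T (s * fst x $ i $ i powr a)) \<partial>\<nu>) \<le> ennreal (min T (s * c))"
        using 1 2 by (cases "T \<le> s * c") (auto simp: min_def)
      then show "(\<integral>\<^sup>+x. ennreal (min T (u * K * fst x $ i $ i powr a * \<bar>w $ i\<bar> powr a)) \<partial>\<nu>) \<le> ennreal (min T (u * K * c * \<bar>w $ i\<bar> powr a))"
        unfolding e by (simp add: s_def mult_ac)
    qed
    also have "\<dots> = hh i a T (u * K * c)"
      unfolding hh_def by (rule mu_int) measurable
    finally show ?thesis .
  qed
  finally show ?thesis by (simp add: add_right_mono)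
qed

lemma term_fin:
  assumes a: "0 < a" "a \<le> \<alpha> i" and ji: "j \<noteq> i"
    and IH: "i < j \<Longrightarrow> positive_rv M (\<lambda>\<omega>. A \<omega> $ i $ j) \<Longrightarrow> (\<integral>\<^sup>+\<omega>. ennreal (\<bar>W \<omega> $ j\<bar> powr a) \<partial>M) < \<infinity>"
  shows "(\<integral>\<^sup>+\<omega>. ennreal ((A \<omega> $ i $ j * \<bar>W \<omega> $ j\<bar>) powr a) \<partial>M) < \<infinity>"
proof (cases "i < j \<and> positive_rv M (\<lambda>\<omega>. A \<omega> $ i $ j)")
  case False
  have "AE \<omega> in M. A \<omega> $ i $ j = 0"
  proof (cases "j < i")
    case True then show ?thesis by (rule low_zero)
  next
    case False2: False
    then have "\<not> positive_rv M (\<lambda>\<omega>. A \<omega> $ i $ j)" using False ji by auto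
    then show ?thesis by (rule nonpos_zero)
  qed
  then have "(\<integral>\<^sup>+\<omega>. ennreal ((A \<omega> $ i $ j * \<bar>W \<omega> $ j\<bar>) powr a) \<partial>M) = (\<integral>\<^sup>+\<omega>. 0 \<partial>M)"
    by (intro nn_integral_cong_AE) (auto elim!: eventually_mono)
  then show ?thesis by simp
next
  case True
  have G: "(\<lambda>q::real\<times>real. ennreal (fst q powr a) * ennreal (\<bar>snd q\<bar> powr a)) \<in> borel_measurable (borel \<Otimes>\<^sub>M borel)"
    by measurable
  have m: "(\<lambda>p::(((real, 'n) vec, 'n) vec \<times> (real, 'n) vec) \<times> (real, 'n) vec. ennreal (fst (fst p) $ i $ j powr a) * ennreal (\<bar>snd p $ j\<bar> powr a)) \<in> borel_measurable (borel \<Otimes>\<^sub>M borel)"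
    using pf_comp[OF G, of i j j] by simp
  have "(\<integral>\<^sup>+\<omega>. ennreal ((A \<omega> $ i $ j * \<bar>W \<omega> $ j\<bar>) powr a) \<partial>M)
      = (\<integral>\<^sup>+\<omega>. ennreal (A \<omega> $ i $ j powr a) * ennreal (\<bar>W \<omega> $ j\<bar> powr a) \<partial>M)"
    by (simp add: powr_mult ennreal_mult)
  also have "\<dots> = (\<integral>\<^sup>+w. (\<integral>\<^sup>+x. ennreal (fst x $ i $ j powr a) * ennreal (\<bar>w $ j\<bar> powr a) \<partial>\<nu>) \<partial>\<mu>)"
    using prod_formula[OF m] by simp
  also have "\<dots> = (\<integral>\<^sup>+w. (\<integral>\<^sup>+x. ennreal (fst x $ i $ j powr a) \<partial>\<nu>) * ennreal (\<bar>w $ j\<bar> powr a) \<partial>\<mu>)"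
    by (intro nn_integral_cong nn_integral_multc) (simp add: \<nu>_def, measurable)
  also have "\<dots> = (\<integral>\<^sup>+x. ennreal (fst x $ i $ j powr a) \<partial>\<nu>) * (\<integral>\<^sup>+w. ennreal (\<bar>w $ j\<bar> powr a) \<partial>\<mu>)"
    by (rule nn_integral_cmult) (simp add: \<mu>_def)
  also have "\<dots> = (\<integral>\<^sup>+\<omega>. ennreal (A \<omega> $ i $ j powr a) \<partial>M) * (\<integral>\<^sup>+\<omega>. ennreal (\<bar>W \<omega> $ j\<bar> powr a) \<partial>M)"
    by (subst nu_int, measurable, subst mu_int, measurable)
  also have "\<dots> < \<infinity>"
    using A_mom[of a i j] a IH True by (simp add: ennreal_mult_less_top)
  finally show ?thesis .
qed

lemma R_fin:
  assumes a: "0 < a" "a \<le> \<alpha> i"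
    and tf: "\<And>j. j \<noteq> i \<Longrightarrow> (\<integral>\<^sup>+\<omega>. ennreal ((A \<omega> $ i $ j * \<bar>W \<omega> $ j\<bar>) powr a) \<partial>M) < \<infinity>"
  shows "(\<integral>\<^sup>+\<omega>. ennreal (Rf i \<omega> powr a) \<partial>M) < \<infinity>"
proof -
  have "finite S \<Longrightarrow> S \<subseteq> UNIV - {i} \<Longrightarrow> (\<integral>\<^sup>+\<omega>. ennreal (((\<Sum>j\<in>S. A \<omega> $ i $ j * \<bar>W \<omega> $ j\<bar>) + B \<omega> $ i) powr a) \<partial>M) < \<infinity>" for S
  proof (induction S rule: finite_induct)
    case empty
    then show ?case using B_mom[of a i] a by simp
  next
    case (insert j S)
    define x where "x \<omega> = A \<omega> $ i $ j * \<bar>W \<omega> $ j\<bar>" for \<omega>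
    define y where "y \<omega> = (\<Sum>j\<in>S. A \<omega> $ i $ j * \<bar>W \<omega> $ j\<bar>) + B \<omega> $ i" for \<omega>
    have ji: "j \<noteq> i" using insert by auto
    have IHS: "(\<integral>\<^sup>+\<omega>. ennreal (y \<omega> powr a) \<partial>M) < \<infinity>" unfolding y_def using insert by auto
    have tx: "(\<integral>\<^sup>+\<omega>. ennreal (x \<omega> powr a) \<partial>M) < \<infinity>" unfolding x_def using tf[OF ji] .
    have xm[measurable]: "x \<in> borel_measurable M" unfolding x_def by measurable
    have ym[measurable]: "y \<in> borel_measurable M" unfolding y_def by measurable
    have "(\<integral>\<^sup>+\<omega>. ennreal (((\<Sum>j\<in>insert j S. A \<omega> $ i $ j * \<bar>W \<omega> $ j\<bar>) + B \<omega> $ i) powr a) \<partial>M)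
        = (\<integral>\<^sup>+\<omega>. ennreal ((x \<omega> + y \<omega>) powr a) \<partial>M)"
      using insert by (simp add: x_def y_def add.assoc)
    also have "\<dots> \<le> (\<integral>\<^sup>+\<omega>. ennreal (2 powr a) * (ennreal (x \<omega> powr a) + ennreal (y \<omega> powr a)) \<partial>M)"
    proof (rule nn_integral_mono_AE)
      show "AE \<omega> in M. ennreal ((x \<omega> + y \<omega>) powr a) \<le> ennreal (2 powr a) * (ennreal (x \<omega> powr a) + ennreal (y \<omega> powr a))"
        using T_nonneg
      proof eventually_elim
        case (elim \<omega>)
        have "0 \<le> x \<omega>" "0 \<le> y \<omega>" unfolding x_def y_def using elim
          by (auto intro!: add_nonneg_nonneg sum_nonneg)
        then have "(x \<omega> + y \<omega>) powr a \<le> 2 powr a * (x \<omega> powr a + y \<omega> powr a)"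
          using a by (intro powr_add2) auto
        then show ?case by (simp add: ennreal_mult ennreal_plus ennreal_leI flip: ennreal_plus ennreal_mult)
      qed
    qed
    also have "\<dots> = ennreal (2 powr a) * ((\<integral>\<^sup>+\<omega>. ennreal (x \<omega> powr a) \<partial>M) + (\<integral>\<^sup>+\<omega>. ennreal (y \<omega> powr a) \<partial>M))"
      by (subst nn_integral_cmult) (auto simp: nn_integral_add)
    also have "\<dots> < \<infinity>" using tx IHS by (simp add: ennreal_mult_less_top)
    finally show ?case .
  qed
  from this[of "UNIV - {i}"] show ?thesis by (simp add: Rf_def)
qed

lemma INF_zero:
  assumes q: "0 \<le> q" "q < 1" and T: "0 \<le> T"
  shows "(INF n. hh i a T (q ^ n)) = 0"
proof -
  define f where "f n \<omega> = ennreal (min T (q ^ n * \<bar>W \<omega> $ i\<bar> powr a))" for n \<omega>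
  have fm[measurable]: "f n \<in> borel_measurable M" for n unfolding f_def by measurable
  have dec: "f (Suc n) \<omega> \<le> f n \<omega>" for n \<omega>
  proof -
    have "q ^ Suc n \<le> q ^ n" using power_decreasing[of n "Suc n" q] q by simp
    then have "q ^ Suc n * \<bar>W \<omega> $ i\<bar> powr a \<le> q ^ n * \<bar>W \<omega> $ i\<bar> powr a"
      by (intro mult_right_mono) auto
    then show ?thesis unfolding f_def by (intro ennreal_leI) auto
  qed
  have f0: "(\<integral>\<^sup>+\<omega>. f 0 \<omega> \<partial>M) < \<infinity>"
  proof -
    have "(\<integral>\<^sup>+\<omega>. f 0 \<omega> \<partial>M) \<le> (\<integral>\<^sup>+\<omega>. ennreal T \<partial>M)"
      unfolding f_def by (intro nn_integral_mono ennreal_leI) auto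
    also have "\<dots> = ennreal T" by (simp add: emeasure_space_1)
    finally show ?thesis using ennreal_less_top[of T] unfolding infinity_ennreal_def by (rule order.strict_trans1)
  qed
  have pw: "(INF n. f n \<omega>) = 0" for \<omega>
  proof -
    have "decseq (\<lambda>n. f n \<omega>)" using dec by (intro decseq_SucI) auto
    then have l1: "(\<lambda>n. f n \<omega>) \<longlonglongrightarrow> (INF n. f n \<omega>)" by (rule LIMSEQ_INF)
    have "(\<lambda>n. q ^ n * \<bar>W \<omega> $ i\<bar> powr a) \<longlonglongrightarrow> 0 * \<bar>W \<omega> $ i\<bar> powr a"
      using q by (intro tendsto_mult LIMSEQ_power_zero tendsto_const) auto
    then have "(\<lambda>n. min T (q ^ n * \<bar>W \<omega> $ i\<bar> powr a)) \<longlonglongrightarrow> min T 0"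
      by (intro tendsto_min tendsto_const) auto
    then have l2: "(\<lambda>n. f n \<omega>) \<longlonglongrightarrow> ennreal (min T 0)"
      unfolding f_def by (rule tendsto_ennrealI)
    have "(INF n. f n \<omega>) = ennreal (min T 0)" using LIMSEQ_unique[OF l1 l2] .
    then show ?thesis using T by simp
  qed
  have "(\<integral>\<^sup>+\<omega>. (INF n. f n \<omega>) \<partial>M) = (INF n. integral\<^sup>N M (f n))"
    by (rule nn_integral_monotone_convergence_INF_AE'[of f, OF _ _ f0]) (auto simp: dec)
  then have "(INF n. integral\<^sup>N M (f n)) = 0" by (simp add: pw)
  moreover have "integral\<^sup>N M (f n) = hh i a T (q ^ n)" for n unfolding hh_def f_def[abs_def] by simp
  ultimately show ?thesis by simp
qed

lemma main_step:
  assumes a: "0 < a" "a < \<alpha> i"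
    and tf: "\<And>j. j \<noteq> i \<Longrightarrow> (\<integral>\<^sup>+\<omega>. ennreal ((A \<omega> $ i $ j * \<bar>W \<omega> $ j\<bar>) powr a) \<partial>M) < \<infinity>"
  shows "(\<integral>\<^sup>+\<omega>. ennreal (\<bar>W \<omega> $ i\<bar> powr a) \<partial>M) < \<infinity>"
proof -
  define D where "D = (\<integral>\<^sup>+\<omega>. ennreal (Rf i \<omega> powr a) \<partial>M)"
  have D: "D < \<infinity>" unfolding D_def using a by (intro R_fin tf) auto
  obtain c where c: "0 \<le> c" "c < 1" "(\<integral>\<^sup>+\<omega>. ennreal (A \<omega> $ i $ i powr a) \<partial>M) = ennreal c"
    using c_lt1[OF a] by blast
  define K where "K = 2 / (1 + c)"
  have K1: "1 < K" using c by (simp add: K_def field_simps)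
  obtain K' where K': "0 < K'" "\<And>x y. 0 \<le> x \<Longrightarrow> 0 \<le> y \<Longrightarrow> (x + y) powr a \<le> K * x powr a + K' * y powr a"
    using powr_split[OF a(1) K1] by blast
  define q where "q = K * c"
  have q: "0 \<le> q" "q < 1" using c K1 by (auto simp: q_def K_def field_simps)
  define E where "E = ennreal (K' / (1 - q)) * D"
  have E: "E < \<infinity>" using D by (simp add: E_def ennreal_mult_less_top)
  have step: "hh i a T u \<le> hh i a T (u * q) + ennreal (u * K') * D" if "0 \<le> u" for T u
    using step_ineq[OF a(1) _ _ K'(2) c(3) c(1) that, of T] K1 K'(1) unfolding D_def q_def
    by (simp add: mult.assoc)
  have iter: "hh i a T 1 \<le> hh i a T (q ^ n) + ennreal ((\<Sum>k<n. q ^ k) * K') * D" for T n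
  proof (induction n)
    case 0 then show ?case by simp
  next
    case (Suc n)
    define X where "X = ennreal (q ^ n * K') * D"
    define Y where "Y = ennreal ((\<Sum>k<n. q ^ k) * K') * D"
    have s1: "hh i a T (q ^ n) \<le> hh i a T (q ^ Suc n) + X"
      using step[of "q ^ n" T] q unfolding X_def by (simp add: mult.commute)
    have "hh i a T 1 \<le> hh i a T (q ^ n) + Y" using Suc.IH unfolding Y_def .
    also have "\<dots> \<le> (hh i a T (q ^ Suc n) + X) + Y" using s1 by (rule add_right_mono)
    also have "\<dots> = hh i a T (q ^ Suc n) + (X + Y)" by (simp add: add.assoc)
    also have "X + Y = (ennreal (q ^ n * K') + ennreal ((\<Sum>k<n. q ^ k) * K')) * D"
      unfolding X_def Y_def by (simp add: distrib_right)
    also have "ennreal (q ^ n * K') + ennreal ((\<Sum>k<n. q ^ k) * K') = ennreal ((\<Sum>k<Suc n. q ^ k) * K')"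
    proof -
      have "0 \<le> (\<Sum>k<n. q ^ k)" using q by (intro sum_nonneg) auto
      then have "0 \<le> q ^ n * K'" "0 \<le> (\<Sum>k<n. q ^ k) * K'" using q K' by auto
      then have "ennreal (q ^ n * K') + ennreal ((\<Sum>k<n. q ^ k) * K') = ennreal (q ^ n * K' + (\<Sum>k<n. q ^ k) * K')"
        by (simp add: ennreal_plus)
      also have "q ^ n * K' + (\<Sum>k<n. q ^ k) * K' = (\<Sum>k<Suc n. q ^ k) * K'"
        by (simp add: distrib_right)
      finally show ?thesis .
    qed
    finally show ?case .
  qed
  have geo: "(\<Sum>k<n. q ^ k) * K' \<le> K' / (1 - q)" for n
  proof -
    have "(\<Sum>k<n. q ^ k) = (1 - q ^ n) / (1 - q)" using q by (simp add: sum_gp_strict)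
    also have "\<dots> \<le> 1 / (1 - q)" using q by (intro divide_right_mono) auto
    finally show ?thesis using K' q by (simp add: mult_right_mono divide_simps)
  qed
  have bound: "hh i a T 1 \<le> E" if T: "0 \<le> T" for T
  proof -
    have "hh i a T 1 \<le> hh i a T (q ^ n) + E" for n
    proof -
      have "ennreal ((\<Sum>k<n. q ^ k) * K') * D \<le> E"
        unfolding E_def by (intro mult_right_mono ennreal_leI geo) auto
      then show ?thesis using iter[of T n] by (meson add_left_mono order_trans)
    qed
    then have "hh i a T 1 \<le> (INF n. hh i a T (q ^ n) + E)" by (rule INF_greatest)
    also have "\<dots> = (INF n. hh i a T (q ^ n)) + E" by (rule INF_ennreal_add_const)
    also have "\<dots> = E" using INF_zero[OF q T] by simp
    finally show ?thesis .
  qed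
  have "(\<integral>\<^sup>+\<omega>. ennreal (\<bar>W \<omega> $ i\<bar> powr a) \<partial>M) = (\<integral>\<^sup>+\<omega>. (SUP n. ennreal (min (real n) (1 * \<bar>W \<omega> $ i\<bar> powr a))) \<partial>M)"
  proof (intro nn_integral_cong)
    fix \<omega>
    show "ennreal (\<bar>W \<omega> $ i\<bar> powr a) = (SUP n. ennreal (min (real n) (1 * \<bar>W \<omega> $ i\<bar> powr a)))"
    proof (rule antisym)
      obtain n :: nat where "\<bar>W \<omega> $ i\<bar> powr a \<le> real n" using real_arch_simple by blast
      then have "ennreal (\<bar>W \<omega> $ i\<bar> powr a) = ennreal (min (real n) (1 * \<bar>W \<omega> $ i\<bar> powr a))" by simp
      then show "ennreal (\<bar>W \<omega> $ i\<bar> powr a) \<le> (SUP n. ennreal (min (real n) (1 * \<bar>W \<omega> $ i\<bar> powr a)))"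
        by (metis SUP_upper UNIV_I)
      show "(SUP n. ennreal (min (real n) (1 * \<bar>W \<omega> $ i\<bar> powr a))) \<le> ennreal (\<bar>W \<omega> $ i\<bar> powr a)"
        by (intro SUP_least ennreal_leI) auto
    qed
  qed
  also have "\<dots> = (SUP n. hh i a (real n) 1)"
    unfolding hh_def
  proof (rule nn_integral_monotone_convergence_SUP)
    show "incseq (\<lambda>n \<omega>. ennreal (min (real n) (1 * \<bar>W \<omega> $ i\<bar> powr a)))"
      by (intro incseq_SucI le_funI ennreal_leI) auto
  qed measurable
  also have "\<dots> \<le> E" by (intro SUP_least bound) auto
  also have "\<dots> < \<infinity>" by (rule E)
  finally show ?thesis .
qed

lemma main_all: "\<forall>a. 0 < a \<and> a < alpha_tilde M A \<alpha> i \<longrightarrow> (\<integral>\<^sup>+\<omega>. ennreal (\<bar>W \<omega> $ i\<bar> powr a) \<partial>M) < \<infinity>"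
proof (induction i rule: measure_induct_rule[where f="\<lambda>i. card {j. i < j}"])
  case (less i)
  show ?case
  proof (intro allI impI, elim conjE)
    fix a assume a0: "0 < a" and at: "a < alpha_tilde M A \<alpha> i"
    have ai: "a < \<alpha> i" using at_le_alpha[of i] at by simp
    show "(\<integral>\<^sup>+\<omega>. ennreal (\<bar>W \<omega> $ i\<bar> powr a) \<partial>M) < \<infinity>"
    proof (rule main_step[OF a0 ai])
      fix j assume ji: "j \<noteq> i"
      show "(\<integral>\<^sup>+\<omega>. ennreal ((A \<omega> $ i $ j * \<bar>W \<omega> $ j\<bar>) powr a) \<partial>M) < \<infinity>"
      proof (rule term_fin[OF a0 _ ji])
        show "a \<le> \<alpha> i" using ai by simp
        assume ij: "i < j" and pos: "positive_rv M (\<lambda>\<omega>. A \<omega> $ i $ j)"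
        have card: "card {k. j < k} < card {k. i < k}"
        proof (rule psubset_card_mono)
          show "{k. j < k} \<subset> {k. i < k}" using ij by auto
        qed simp
        have "a < alpha_tilde M A \<alpha> j" using at_mono[OF less_imp_le[OF ij] pos] at by simp
        then show "(\<integral>\<^sup>+\<omega>. ennreal (\<bar>W \<omega> $ j\<bar> powr a) \<partial>M) < \<infinity>"
          using less[OF card] a0 by blast
      qed
    qed
  qed
qed

end

theorem lemma4p2:
  fixes M :: "'a measure"
    and A :: "'a \<Rightarrow> ((real, 'n::{finite,linorder}) vec, 'n) vec"
    and B W :: "'a \<Rightarrow> (real, 'n) vec"
    and \<alpha> :: "'n \<Rightarrow> real"
  assumes "prob_space M"
    and "A \<in> borel_measurable M" and "B \<in> borel_measurable M" and "W \<in> borel_measurable M"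
    and "condition_T M A B \<alpha>"
    and "prob_space.indep_set M
       (sigma_sets (space M) {(\<lambda>\<omega>. (A \<omega>, B \<omega>)) -` S \<inter> space M | S. S \<in> sets borel})
       (sigma_sets (space M) {W -` S \<inter> space M | S. S \<in> sets borel})"
    and "distr M borel W = distr M borel (\<lambda>\<omega>. A \<omega> *v W \<omega> + B \<omega>)"
    and "0 < a" and "a < alpha_tilde M A \<alpha> i"
  shows "(\<integral>\<^sup>+\<omega>. ennreal (\<bar>W \<omega> $ i\<bar> powr a) \<partial>M) < \<infinity>"
proof -
  interpret perp M A B W \<alpha>
    using assms(1-7) by (simp add: perp_def perp_axioms_def)
  show ?thesis using main_all[of i] assms(8,9) by blast
qed

end
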